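(* Let $(X,\tau_\delta)_{\delta>0}$ be a Hilbert dilation system with $d=\dim X$, let $\mathcal E\subseteq X$ be an ellipsoid and $\epsilon\in(0,1/2)$. Then there exist closed intervals $J_1,\dots,J_d\subseteq(0,\infty)$ with $r(J_p)/l(J_p)\le\epsilon^{-2}$ for all $p$, such that $\tau_\delta\mathcal E$ is $\epsilon$-degenerate for every $\delta\in(0,\infty)\setminus\bigcup_{p=1}^dJ_p$.
   Context: Hilbert dilation system: $X$ a real Hilbert space of finite dimension $d$, $X=\bigoplus_{\nu=1}^mX_\nu$ orthogonal, $\tau_\delta|_{X_\nu}=\delta^{-\nu}\mathrm{id}$. An ellipsoid is a set $\{\sum_{i=1}^dc_i\sigma_iv_i:\sum c_i^2\le1\}$ with $\sigma_1\ge\dots\ge\sigma_d\ge0$ (principal axis lengths) and $\{v_i\}$ an orthonormal basis; it is $\epsilon$-degenerate if no principal axis length lies in $[\epsilon,\epsilon^{-1}]$. $l(J)\le r(J)$ denote the endpoints of an interval $J$. *)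

theory Defs
  imports "HOL-Analysis.Analysis"
begin

definition hilbert_dilation_system ::
  "nat \<Rightarrow> (nat \<Rightarrow> 'a::euclidean_space set) \<Rightarrow> (real \<Rightarrow> 'a \<Rightarrow> 'a) \<Rightarrow> bool" where
  "hilbert_dilation_system m Xs tau \<longleftrightarrow>
     (\<forall>\<nu>\<in>{1..m}. subspace (Xs \<nu>)) \<and>
     (\<forall>\<nu>\<in>{1..m}. \<forall>\<mu>\<in>{1..m}. \<nu> \<noteq> \<mu> \<longrightarrow> (\<forall>x\<in>Xs \<nu>. \<forall>y\<in>Xs \<mu>. x \<bullet> y = 0)) \<and>
     span (\<Union>\<nu>\<in>{1..m}. Xs \<nu>) = UNIV \<and>
     (\<forall>\<delta>>0. linear (tau \<delta>) \<and>
        (\<forall>\<nu>\<in>{1..m}. \<forall>x\<in>Xs \<nu>. tau \<delta> x = (1 / \<delta> ^ \<nu>) *\<^sub>R x))"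

definition ellipsoid_rep :: "'a::euclidean_space set \<Rightarrow> (nat \<Rightarrow> real) \<Rightarrow> (nat \<Rightarrow> 'a) \<Rightarrow> bool" where
  "ellipsoid_rep E \<sigma> v \<longleftrightarrow>
     (\<forall>i\<in>{1..DIM('a)}. \<forall>j\<in>{1..DIM('a)}. v i \<bullet> v j = (if i = j then 1 else 0)) \<and>
     (\<forall>i\<in>{1..DIM('a)}. \<forall>j\<in>{1..DIM('a)}. i \<le> j \<longrightarrow> \<sigma> j \<le> \<sigma> i) \<and>
     (\<forall>i\<in>{1..DIM('a)}. 0 \<le> \<sigma> i) \<and>
     E = {(\<Sum>i\<in>{1..DIM('a)}. (c i * \<sigma> i) *\<^sub>R v i) | c. (\<Sum>i\<in>{1..DIM('a)}. (c i)\<^sup>2) \<le> 1}"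

definition ellipsoid :: "'a::euclidean_space set \<Rightarrow> bool" where
  "ellipsoid E \<longleftrightarrow> (\<exists>\<sigma> v. ellipsoid_rep E \<sigma> v)"

definition eps_degenerate :: "real \<Rightarrow> 'a::euclidean_space set \<Rightarrow> bool" where
  "eps_degenerate \<epsilon> E \<longleftrightarrow>
     (\<exists>\<sigma> v. ellipsoid_rep E \<sigma> v \<and> (\<forall>i\<in>{1..DIM('a)}. \<sigma> i \<notin> {\<epsilon>..1/\<epsilon>}))"

end

theory Submission
  imports Defs
begin

definition ortho :: "nat set \<Rightarrow> (nat \<Rightarrow> 'a::euclidean_space) \<Rightarrow> bool" where
  "ortho I u \<longleftrightarrow> (\<forall>i\<in>I. \<forall>j\<in>I. u i \<bullet> u j = (if i = j then 1 else 0))"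

lemma sum_inner_weighted:
  fixes f :: "nat \<Rightarrow> 'a::real_inner"
  assumes "finite I" "\<And>i j. i \<in> I \<Longrightarrow> j \<in> I \<Longrightarrow> f i \<bullet> f j = (if i = j then w i else 0)"
  shows "(\<Sum>i\<in>I. a i *\<^sub>R f i) \<bullet> (\<Sum>j\<in>I. b j *\<^sub>R f j) = (\<Sum>i\<in>I. a i * b i * w i)"
proof -
  have "(\<Sum>i\<in>I. a i *\<^sub>R f i) \<bullet> (\<Sum>j\<in>I. b j *\<^sub>R f j) = (\<Sum>i\<in>I. \<Sum>j\<in>I. a i * b j * (f i \<bullet> f j))"
    apply (simp add: inner_sum_left inner_sum_right sum_distrib_left mult_ac)
    apply (rule sum.swap)
    done
  also have "\<dots> = (\<Sum>i\<in>I. \<Sum>j\<in>I. if j = i then a i * b i * w i else 0)"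
    by (intro sum.cong refl) (auto simp: assms(2))
  also have "\<dots> = (\<Sum>i\<in>I. a i * b i * w i)"
    using assms(1) by (simp add: sum.delta)
  finally show ?thesis .
qed

lemma ortho_sum_inner:
  assumes "ortho I u" "finite I"
  shows "(\<Sum>i\<in>I. a i *\<^sub>R u i) \<bullet> (\<Sum>j\<in>I. b j *\<^sub>R u j) = (\<Sum>i\<in>I. a i * b i)"
  using sum_inner_weighted[of I u "\<lambda>_. 1" a b] assms unfolding ortho_def by auto

lemma ortho_coeff:
  assumes "ortho I u" "finite I" "k \<in> I"
  shows "(\<Sum>i\<in>I. a i *\<^sub>R u i) \<bullet> u k = a k"
proof -
  have "(\<Sum>i\<in>I. a i *\<^sub>R u i) \<bullet> u k = (\<Sum>i\<in>I. if i = k then a i else 0)"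
    unfolding inner_sum_left using assms unfolding ortho_def by (intro sum.cong) auto
  then show ?thesis using assms by (simp add: sum.delta')
qed

lemma bessel:
  assumes "ortho I u" "finite I"
  shows "(\<Sum>i\<in>I. (x \<bullet> u i)\<^sup>2) \<le> x \<bullet> x"
proof -
  let ?s = "\<Sum>i\<in>I. (x \<bullet> u i) *\<^sub>R u i"
  have a: "?s \<bullet> ?s = (\<Sum>i\<in>I. (x \<bullet> u i)\<^sup>2)"
    using ortho_sum_inner[OF assms] by (simp add: power2_eq_square)
  have b: "x \<bullet> ?s = (\<Sum>i\<in>I. (x \<bullet> u i)\<^sup>2)"
    by (simp add: inner_sum_right power2_eq_square)
  have "0 \<le> (x - ?s) \<bullet> (x - ?s)" by simp
  also have "\<dots> = x \<bullet> x - 2 * (x \<bullet> ?s) + ?s \<bullet> ?s"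
    by (simp add: inner_diff_left inner_diff_right inner_commute)
  finally show ?thesis using a b by simp
qed

lemma ortho_inj: "ortho I u \<Longrightarrow> inj_on u I"
  unfolding ortho_def inj_on_def by (metis one_neq_zero)

lemma ortho_indep:
  assumes "ortho I u" "finite I"
  shows "independent (u ` I)" "card (u ` I) = card I"
proof -
  show "card (u ` I) = card I" using ortho_inj[OF assms(1)] by (simp add: card_image)
  have "pairwise orthogonal (u ` I)"
    using assms(1) unfolding ortho_def pairwise_def orthogonal_def by auto
  moreover have "0 \<notin> u ` I" using assms(1) unfolding ortho_def by force
  ultimately show "independent (u ` I)" by (rule pairwise_orthogonal_independent)
qed

lemma kernel_exists:
  fixes u :: "nat \<Rightarrow> 'a::euclidean_space"
  assumes "ortho I u" "finite I" "subspace W" "card I < dim W"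
  shows "\<exists>y\<in>W. y \<noteq> 0 \<and> (\<forall>j\<in>I. y \<bullet> u j = 0)"
proof -
  define P where "P x = (\<Sum>j\<in>I. (x \<bullet> u j) *\<^sub>R u j)" for x
  have lin: "linear P" unfolding P_def
    by (rule linearI) (simp_all add: inner_add_left scaleR_add_left sum.distrib scaleR_sum_right)
  have "\<not> inj_on P (span W)"
  proof
    assume inj: "inj_on P (span W)"
    have "dim (P ` W) = dim W" by (rule dim_image_eq[OF lin inj])
    moreover have "P ` W \<subseteq> span (u ` I)"
      unfolding P_def by (auto intro!: span_sum intro: span_scale span_base)
    then have "dim (P ` W) \<le> card (u ` I)"
      using assms(2) by (intro dim_le_card) auto
    ultimately show False using ortho_indep[OF assms(1,2)] assms(4) by simp
  qed
  then obtain a b where ab: "a \<in> W" "b \<in> W" "a \<noteq> b" "P a = P b"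
    using span_eq_iff[of W] assms(3) unfolding inj_on_def by metis
  define y where "y = a - b"
  have "y \<in> W" using ab assms(3) by (simp add: y_def subspace_diff)
  moreover have "y \<noteq> 0" using ab by (simp add: y_def)
  moreover have "P y = 0" using ab lin by (simp add: y_def linear_diff)
  moreover have "P y \<bullet> u j = y \<bullet> u j" if "j \<in> I" for j
    unfolding P_def using ortho_coeff[OF assms(1,2) that] .
  ultimately show ?thesis by auto
qed

lemma parseval:
  fixes u :: "nat \<Rightarrow> 'a::euclidean_space"
  assumes "ortho {1..DIM('a)} u"
  shows "y = (\<Sum>i\<in>{1..DIM('a)}. (y \<bullet> u i) *\<^sub>R u i)"
proof (rule ccontr)
  let ?d = "DIM('a)"
  define z where "z = y - (\<Sum>i\<in>{1..?d}. (y \<bullet> u i) *\<^sub>R u i)"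
  assume "y \<noteq> (\<Sum>i\<in>{1..?d}. (y \<bullet> u i) *\<^sub>R u i)"
  then have z0: "z \<noteq> 0" by (simp add: z_def)
  have zu: "z \<bullet> u j = 0" if "j \<in> {1..?d}" for j
    using ortho_coeff[OF assms _ that, of "\<lambda>i. y \<bullet> u i"] by (simp add: z_def inner_diff_left)
  define u' where "u' = u(Suc ?d := z /\<^sub>R norm z)"
  have "ortho {1..Suc ?d} u'"
    using assms zu z0 unfolding ortho_def u'_def
    by (auto simp: atLeastAtMostSuc_conv inner_commute dot_square_norm power2_eq_square field_simps)
  from ortho_indep[OF this] have "card (u' ` {1..Suc ?d}) \<le> ?d"
    using independent_bound[of "u' ` {1..Suc ?d}"] by simp
  then show False using ortho_indep[OF \<open>ortho {1..Suc ?d} u'\<close>] by simp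
qed


lemma quad_zero:
  fixes a b :: real
  assumes "\<And>t. 2 * t * a + t\<^sup>2 * b \<le> 0"
  shows "a = 0"
proof (rule ccontr)
  assume "a \<noteq> 0"
  define t where "t = a / (\<bar>b\<bar> + 1)"
  have pos: "\<bar>b\<bar> + 1 > 0" by simp
  have "2 * t * a + t\<^sup>2 * b \<le> 0" by (rule assms)
  then have "(2 * t * a + t\<^sup>2 * b) * (\<bar>b\<bar> + 1)\<^sup>2 \<le> 0"
    by (simp add: mult_nonpos_nonneg)
  moreover have "(2 * t * a + t\<^sup>2 * b) * (\<bar>b\<bar> + 1)\<^sup>2 = a\<^sup>2 * (2 * (\<bar>b\<bar> + 1) + b)"
  proof -
    have tc: "t * (\<bar>b\<bar> + 1) = a" unfolding t_def using pos by simp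
    have "(2 * t * a + t\<^sup>2 * b) * (\<bar>b\<bar> + 1)\<^sup>2 = 2 * a * (t * (\<bar>b\<bar> + 1)) * (\<bar>b\<bar> + 1) + (t * (\<bar>b\<bar> + 1))\<^sup>2 * b"
      by (simp add: power2_eq_square algebra_simps)
    then show ?thesis unfolding tc by (simp add: power2_eq_square algebra_simps)
  qed
  moreover have "a\<^sup>2 * (2 * (\<bar>b\<bar> + 1) + b) > 0"
    using \<open>a \<noteq> 0\<close> by (intro mult_pos_pos) (auto simp: abs_if)
  ultimately show False by simp
qed

lemma adj_sym:
  fixes M :: "'a::euclidean_space \<Rightarrow> 'a"
  assumes "linear M"
  shows "a \<bullet> M (adjoint M b) = adjoint M a \<bullet> adjoint M b"
  using adjoint_works[OF assms, of "adjoint M b" a] by (simp add: inner_commute)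

lemma spectral:
  fixes M :: "'a::euclidean_space \<Rightarrow> 'a"
  assumes lin: "linear M"
  shows "k \<le> DIM('a) \<Longrightarrow> \<exists>u l. ortho {1..k} u \<and> (\<forall>i\<in>{1..k}. M (adjoint M (u i)) = l i *\<^sub>R u i) \<and>
     (\<forall>i\<in>{1..k}. \<forall>x. (\<forall>j\<in>{1..<i}. x \<bullet> u j = 0) \<longrightarrow> adjoint M x \<bullet> adjoint M x \<le> l i * (x \<bullet> x))"
proof (induction k)
  case 0
  then show ?case by (auto simp: ortho_def)
next
  case (Suc k)
  define N where "N = adjoint M"
  have linN: "linear N" unfolding N_def by (rule adjoint_linear[OF lin])
  have sym: "a \<bullet> M (N b) = N a \<bullet> N b" for a b unfolding N_def by (rule adj_sym[OF lin])
  from Suc obtain u l where ou: "ortho {1..k} u"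
    and eig: "\<forall>i\<in>{1..k}. M (N (u i)) = l i *\<^sub>R u i"
    and mx: "\<forall>i\<in>{1..k}. \<forall>x. (\<forall>j\<in>{1..<i}. x \<bullet> u j = 0) \<longrightarrow> N x \<bullet> N x \<le> l i * (x \<bullet> x)"
    unfolding N_def by auto
  define C where "C = {x. \<forall>j\<in>{1..k}. x \<bullet> u j = 0}"
  have subC: "subspace C" unfolding C_def subspace_def
    by (auto simp: inner_add_left)
  have "\<exists>y\<in>UNIV. y \<noteq> 0 \<and> (\<forall>j\<in>{1..k}. y \<bullet> u j = 0)"
    using kernel_exists[OF ou _ subspace_UNIV] Suc.prems by (simp add: dim_UNIV)
  then obtain y0 where y0: "y0 \<noteq> 0" "y0 \<in> C" unfolding C_def by auto
  define K where "K = C \<inter> sphere 0 1"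
  have "compact K" unfolding K_def
    by (intro closed_Int_compact closed_subspace subC compact_sphere)
  moreover have "K \<noteq> {}"
  proof -
    have "y0 /\<^sub>R norm y0 \<in> K" using y0 subC unfolding K_def by (auto simp: subspace_scale)
    then show ?thesis by auto
  qed
  moreover have "continuous_on K (\<lambda>x. N x \<bullet> N x)"
    using linN by (intro continuous_intros linear_continuous_on) (use linear_conv_bounded_linear[of N] in auto)
  ultimately obtain w where wK: "w \<in> K" and wmax: "\<And>y. y \<in> K \<Longrightarrow> N y \<bullet> N y \<le> N w \<bullet> N w"
    using continuous_attains_sup[of K "\<lambda>x. N x \<bullet> N x"] by blast
  define lam where "lam = N w \<bullet> N w"
  have wC: "w \<in> C" and w1: "w \<bullet> w = 1" using wK unfolding K_def by (auto simp: dot_square_norm)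
  have maxC: "N x \<bullet> N x \<le> lam * (x \<bullet> x)" if "x \<in> C" for x
  proof (cases "x = 0")
    case True then show ?thesis using linN by (simp add: linear_0)
  next
    case False
    have "x /\<^sub>R norm x \<in> K" using that False subC unfolding K_def by (auto simp: subspace_scale)
    from wmax[OF this] have "N (x /\<^sub>R norm x) \<bullet> N (x /\<^sub>R norm x) \<le> lam" unfolding lam_def .
    then have "(N x \<bullet> N x) / (norm x)\<^sup>2 \<le> lam"
      using linN by (simp add: linear_scale power2_eq_square divide_inverse mult_ac)
    then show ?thesis using False by (simp add: dot_square_norm divide_le_eq mult_ac)
  qed
  define R where "R = M (N w) - lam *\<^sub>R w"
  have Ru: "R \<bullet> u j = 0" if "j \<in> {1..k}" for j
  proof -
    have "R \<bullet> u j = N (u j) \<bullet> N w - lam * (w \<bullet> u j)"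
      using sym[of "u j" w] by (simp add: R_def inner_diff_left inner_diff_right inner_commute)
    also have "N (u j) \<bullet> N w = w \<bullet> M (N (u j))" using sym[of w "u j"] by (simp add: inner_commute)
    also have "\<dots> = l j * (w \<bullet> u j)" using eig that by simp
    finally show ?thesis using wC that unfolding C_def by simp
  qed
  have RC: "R \<bullet> z = 0" if "z \<in> C" for z
  proof -
    have "2 * t * (R \<bullet> z) + t\<^sup>2 * (N z \<bullet> N z - lam * (z \<bullet> z)) \<le> 0" for t
    proof -
      have "w + t *\<^sub>R z \<in> C" using subC wC that by (simp add: subspace_add subspace_scale)
      from maxC[OF this] have mc: "N (w + t *\<^sub>R z) \<bullet> N (w + t *\<^sub>R z) \<le> lam * ((w + t *\<^sub>R z) \<bullet> (w + t *\<^sub>R z))" .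
      have "N (w + t *\<^sub>R z) = N w + t *\<^sub>R N z" using linN by (simp add: linear_add linear_scale)
      then have e1: "N (w + t *\<^sub>R z) \<bullet> N (w + t *\<^sub>R z) = lam + 2 * t * (N w \<bullet> N z) + t\<^sup>2 * (N z \<bullet> N z)"
        unfolding lam_def by (simp add: inner_add_left inner_add_right inner_commute power2_eq_square algebra_simps)
      have e2: "(w + t *\<^sub>R z) \<bullet> (w + t *\<^sub>R z) = 1 + 2 * t * (w \<bullet> z) + t\<^sup>2 * (z \<bullet> z)"
        using w1 by (simp add: inner_add_left inner_add_right inner_commute power2_eq_square algebra_simps)
      have e3: "R \<bullet> z = N w \<bullet> N z - lam * (w \<bullet> z)"
        using sym[of z w] by (simp add: R_def inner_diff_left inner_diff_right inner_commute)
      have "2 * t * (R \<bullet> z) + t\<^sup>2 * (N z \<bullet> N z - lam * (z \<bullet> z)) =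
          N (w + t *\<^sub>R z) \<bullet> N (w + t *\<^sub>R z) - lam * ((w + t *\<^sub>R z) \<bullet> (w + t *\<^sub>R z))"
        unfolding e1 e2 e3 by (simp add: algebra_simps)
      then show ?thesis using mc by linarith
    qed
    then show ?thesis by (rule quad_zero)
  qed
  have "R \<bullet> z = 0" for z
  proof -
    define z' where "z' = z - (\<Sum>j\<in>{1..k}. (z \<bullet> u j) *\<^sub>R u j)"
    have "z' \<in> C" unfolding C_def z'_def
      using ortho_coeff[OF ou, of _ "\<lambda>j. z \<bullet> u j"] by (auto simp: inner_diff_left)
    then have "R \<bullet> z' = 0" by (rule RC)
    moreover have "R \<bullet> (\<Sum>j\<in>{1..k}. (z \<bullet> u j) *\<^sub>R u j) = 0"
      using Ru by (simp add: inner_sum_right)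
    ultimately show ?thesis by (simp add: z'_def inner_diff_right)
  qed
  then have R0: "R = 0" by (metis inner_eq_zero_iff)
  define u' where "u' = u(Suc k := w)"
  define l' where "l' = l(Suc k := lam)"
  have "ortho {1..Suc k} u'"
    using ou wC w1 unfolding ortho_def u'_def C_def
    by (auto simp: atLeastAtMostSuc_conv inner_commute)
  moreover have "\<forall>i\<in>{1..Suc k}. M (N (u' i)) = l' i *\<^sub>R u' i"
    using eig R0 unfolding u'_def l'_def R_def by (auto simp: atLeastAtMostSuc_conv)
  moreover have "\<forall>i\<in>{1..Suc k}. \<forall>x. (\<forall>j\<in>{1..<i}. x \<bullet> u' j = 0) \<longrightarrow> N x \<bullet> N x \<le> l' i * (x \<bullet> x)"
  proof (intro ballI allI impI)
    fix i x assume i: "i \<in> {1..Suc k}" and h: "\<forall>j\<in>{1..<i}. x \<bullet> u' j = 0"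
    show "N x \<bullet> N x \<le> l' i * (x \<bullet> x)"
    proof (cases "i = Suc k")
      case True
      then have "x \<in> C" using h unfolding C_def u'_def by auto
      then show ?thesis using maxC True unfolding l'_def by simp
    next
      case False
      then have "i \<in> {1..k}" using i by auto
      moreover have "\<forall>j\<in>{1..<i}. x \<bullet> u j = 0" using h False i unfolding u'_def by auto
      ultimately show ?thesis using mx False unfolding l'_def by auto
    qed
  qed
  ultimately show ?case unfolding N_def by blast
qed


lemma ortho_subset: "ortho I u \<Longrightarrow> J \<subseteq> I \<Longrightarrow> ortho J u"
  unfolding ortho_def by blast

lemma span_ortho_repr:
  assumes "ortho J u" "finite J" "x \<in> span (u ` J)"
  shows "\<exists>a. x = (\<Sum>i\<in>J. a i *\<^sub>R u i)"
proof -
  from assms(3) obtain b where "x = (\<Sum>w\<in>u ` J. b w *\<^sub>R w)"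
    using span_finite[of "u ` J"] assms(2) by auto
  also have "\<dots> = (\<Sum>i\<in>J. b (u i) *\<^sub>R u i)"
    using sum.reindex[OF ortho_inj[OF assms(1)], of "\<lambda>w. b w *\<^sub>R w"] by simp
  finally show ?thesis by (rule exI[of _ "\<lambda>i. b (u i)"])
qed

lemma svd:
  fixes M :: "'a::euclidean_space \<Rightarrow> 'a"
  assumes lin: "linear M"
  obtains s u where "ellipsoid_rep (M ` cball 0 1) s u"
    and "\<forall>p\<in>{1..DIM('a)}. \<forall>x\<in>span (u ` {1..p}). s p * norm x \<le> norm (adjoint M x)"
    and "\<forall>p\<in>{1..DIM('a)}. \<forall>W. subspace W \<and> p \<le> dim W \<longrightarrow> (\<exists>y\<in>W. norm y = 1 \<and> norm (adjoint M y) \<le> s p)"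
proof -
  let ?d = "DIM('a)"
  define I where "I = {1..?d}"
  define N where "N = adjoint M"
  have linN: "linear N" unfolding N_def by (rule adjoint_linear[OF lin])
  have sym: "a \<bullet> M (N b) = N a \<bullet> N b" for a b unfolding N_def by (rule adj_sym[OF lin])
  have adj: "x \<bullet> N y = M x \<bullet> y" for x y unfolding N_def by (rule adjoint_works[OF lin])
  obtain u l where ou: "ortho I u"
    and eig: "\<forall>i\<in>I. M (N (u i)) = l i *\<^sub>R u i"
    and mx: "\<forall>i\<in>I. \<forall>x. (\<forall>j\<in>{1..<i}. x \<bullet> u j = 0) \<longrightarrow> N x \<bullet> N x \<le> l i * (x \<bullet> x)"
    using spectral[OF lin, of ?d] unfolding N_def I_def by auto
  have fI: "finite I" unfolding I_def by simp
  have NN: "N (u i) \<bullet> N (u j) = (if i = j then l i else 0)" if "i \<in> I" "j \<in> I" for i j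
  proof -
    have "N (u i) \<bullet> N (u j) = u i \<bullet> M (N (u j))" by (simp add: sym)
    also have "\<dots> = l j * (u i \<bullet> u j)" using eig that by simp
    finally show ?thesis using ou that unfolding ortho_def by auto
  qed
  have lnn: "0 \<le> l i" if "i \<in> I" for i using NN[OF that that] by (metis inner_ge_zero)
  have sorted: "l j \<le> l i" if "i \<in> I" "j \<in> I" "i \<le> j" for i j
  proof -
    have "\<forall>j'\<in>{1..<i}. u j \<bullet> u j' = 0" using ou that unfolding ortho_def I_def by auto
    then have "N (u j) \<bullet> N (u j) \<le> l i * (u j \<bullet> u j)" using mx that by blast
    then show ?thesis using NN[OF that(2) that(2)] ou that(2) unfolding ortho_def by simp
  qed
  define s where "s i = sqrt (l i)" for i
  define Ip where "Ip = {i\<in>I. 0 < l i}"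
  have fIp: "finite Ip" and IpI: "Ip \<subseteq> I" unfolding Ip_def using fI by auto
  define e where "e i = N (u i) /\<^sub>R s i" for i
  have spos: "0 < s i" if "i \<in> Ip" for i using that unfolding Ip_def s_def by simp
  have oe: "ortho Ip e"
    unfolding ortho_def e_def using NN IpI spos
    by (auto simp: s_def Ip_def field_simps)
  have Nu0: "N (u i) = 0" if "i \<in> I" "i \<notin> Ip" for i
  proof -
    have "l i = 0" using that lnn unfolding Ip_def by force
    then show ?thesis using NN[OF that(1) that(1)] by simp
  qed
  have s0: "s i = 0" if "i \<in> I" "i \<notin> Ip" for i
    using that lnn unfolding Ip_def s_def by force
  have Me: "M (e i) = s i *\<^sub>R u i" if "i \<in> Ip" for i
  proof -
    have "M (e i) = (1 / s i) *\<^sub>R M (N (u i))" unfolding e_def using lin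
      by (simp add: linear_scale divide_inverse)
    also have "\<dots> = (l i / s i) *\<^sub>R u i" using eig that IpI by auto
    also have "l i / s i = s i" using that spos[OF that] lnn[of i] IpI
      unfolding s_def by (simp add: real_div_sqrt)
    finally show ?thesis .
  qed
  have rep: "ellipsoid_rep (M ` cball 0 1) s u"
    unfolding ellipsoid_rep_def
  proof (intro conjI)
    show "\<forall>i\<in>{1..?d}. \<forall>j\<in>{1..?d}. u i \<bullet> u j = (if i = j then 1 else 0)"
      using ou unfolding ortho_def I_def .
    show "\<forall>i\<in>{1..?d}. \<forall>j\<in>{1..?d}. i \<le> j \<longrightarrow> s j \<le> s i"
      using sorted unfolding s_def I_def by auto
    show "\<forall>i\<in>{1..?d}. 0 \<le> s i" using lnn unfolding s_def I_def by simp
    show "M ` cball 0 1 = {\<Sum>i\<in>{1..?d}. (c i * s i) *\<^sub>R u i |c. (\<Sum>i\<in>{1..?d}. (c i)\<^sup>2) \<le> 1}"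
    proof (intro equalityI subsetI)
      fix y assume "y \<in> M ` cball 0 1"
      then obtain x where x: "norm x \<le> 1" "y = M x" by auto
      define c where "c i = (if i \<in> Ip then x \<bullet> e i else 0)" for i
      have "y = (\<Sum>i\<in>I. (y \<bullet> u i) *\<^sub>R u i)" using parseval[OF ou[unfolded I_def]] unfolding I_def .
      also have "\<dots> = (\<Sum>i\<in>I. (c i * s i) *\<^sub>R u i)"
      proof (intro sum.cong refl)
        fix i assume i: "i \<in> I"
        have "y \<bullet> u i = x \<bullet> N (u i)" using adj x by simp
        also have "\<dots> = c i * s i"
          using spos[of i] Nu0[OF i] by (cases "i \<in> Ip") (auto simp: c_def e_def)
        finally show "(y \<bullet> u i) *\<^sub>R u i = (c i * s i) *\<^sub>R u i" by simp
      qed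
      finally have y: "y = (\<Sum>i\<in>I. (c i * s i) *\<^sub>R u i)" .
      have "(\<Sum>i\<in>I. (c i)\<^sup>2) = (\<Sum>i\<in>I. if 0 < l i then (x \<bullet> e i)\<^sup>2 else 0)"
        by (intro sum.cong) (auto simp: c_def Ip_def)
      also have "\<dots> = (\<Sum>i\<in>Ip. (x \<bullet> e i)\<^sup>2)"
        unfolding Ip_def by (rule sum.inter_filter[OF fI, symmetric])
      also have "\<dots> \<le> x \<bullet> x" by (rule bessel[OF oe fIp])
      also have "\<dots> \<le> 1" using x(1) by (simp add: dot_square_norm power_le_one)
      finally show "y \<in> {\<Sum>i\<in>{1..?d}. (c i * s i) *\<^sub>R u i |c. (\<Sum>i\<in>{1..?d}. (c i)\<^sup>2) \<le> 1}"
        using y unfolding I_def by blast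
    next
      fix y assume "y \<in> {\<Sum>i\<in>{1..?d}. (c i * s i) *\<^sub>R u i |c. (\<Sum>i\<in>{1..?d}. (c i)\<^sup>2) \<le> 1}"
      then obtain c where c: "(\<Sum>i\<in>I. (c i)\<^sup>2) \<le> 1" "y = (\<Sum>i\<in>I. (c i * s i) *\<^sub>R u i)"
        unfolding I_def by blast
      define x where "x = (\<Sum>i\<in>Ip. c i *\<^sub>R e i)"
      have "x \<bullet> x = (\<Sum>i\<in>Ip. c i * c i)" unfolding x_def by (rule ortho_sum_inner[OF oe fIp])
      also have "\<dots> \<le> (\<Sum>i\<in>I. (c i)\<^sup>2)"
        using IpI fI by (simp add: power2_eq_square sum_mono2)
      finally have "(norm x)\<^sup>2 \<le> 1\<^sup>2" using c(1) by (simp add: dot_square_norm)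
      then have "norm x \<le> 1" by (rule power2_le_imp_le) simp
      moreover have "M x = y"
      proof -
        have "M x = (\<Sum>i\<in>Ip. c i *\<^sub>R M (e i))" unfolding x_def using lin
          by (simp add: linear_sum linear_scale)
        also have "\<dots> = (\<Sum>i\<in>Ip. (c i * s i) *\<^sub>R u i)" using Me by (intro sum.cong) auto
        also have "\<dots> = (\<Sum>i\<in>I. (c i * s i) *\<^sub>R u i)"
          using s0 IpI fI by (intro sum.mono_neutral_left) auto
        finally show ?thesis using c(2) by simp
      qed
      ultimately show "y \<in> M ` cball 0 1" by auto
    qed
  qed
  have P1: "\<forall>p\<in>{1..?d}. \<forall>x\<in>span (u ` {1..p}). s p * norm x \<le> norm (adjoint M x)"
  proof (intro ballI)
    fix p x assume p: "p \<in> {1..?d}" and x: "x \<in> span (u ` {1..p})"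
    have JI: "{1..p} \<subseteq> I" using p unfolding I_def by auto
    have oJ: "ortho {1..p} u" by (rule ortho_subset[OF ou JI])
    obtain a where a: "x = (\<Sum>i\<in>{1..p}. a i *\<^sub>R u i)" using span_ortho_repr[OF oJ _ x] by auto
    have "N x = (\<Sum>i\<in>{1..p}. a i *\<^sub>R N (u i))" unfolding a using linN
      by (simp add: linear_sum linear_scale)
    then have "N x \<bullet> N x = (\<Sum>i\<in>{1..p}. a i * a i * l i)"
    proof -
      have "(\<Sum>i\<in>{1..p}. a i *\<^sub>R N (u i)) \<bullet> (\<Sum>j\<in>{1..p}. a j *\<^sub>R N (u j)) = (\<Sum>i\<in>{1..p}. a i * a i * l i)"
        by (rule sum_inner_weighted) (use NN JI in \<open>auto simp: subset_iff\<close>)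
      then show ?thesis using \<open>N x = _\<close> by simp
    qed
    moreover have "x \<bullet> x = (\<Sum>i\<in>{1..p}. a i * a i)" unfolding a by (rule ortho_sum_inner[OF oJ]) simp
    moreover have "(\<Sum>i\<in>{1..p}. a i * a i * l p) \<le> (\<Sum>i\<in>{1..p}. a i * a i * l i)"
      using sorted JI p by (intro sum_mono mult_left_mono) (auto simp: I_def)
    ultimately have "l p * (x \<bullet> x) \<le> N x \<bullet> N x"
      by (simp add: sum_distrib_left mult_ac)
    then have "(s p * norm x)\<^sup>2 \<le> (norm (N x))\<^sup>2"
      using lnn[of p] p unfolding s_def I_def by (simp add: power_mult_distrib dot_square_norm)
    then show "s p * norm x \<le> norm (adjoint M x)"
      unfolding N_def by (rule power2_le_imp_le) simp
  qed
  have P2: "\<forall>p\<in>{1..?d}. \<forall>W. subspace W \<and> p \<le> dim W \<longrightarrow> (\<exists>y\<in>W. norm y = 1 \<and> norm (adjoint M y) \<le> s p)"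
  proof (intro ballI allI impI)
    fix p and W :: "'a set" assume p: "p \<in> {1..?d}" and W: "subspace W \<and> p \<le> dim W"
    have oJ: "ortho {1..<p} u" by (rule ortho_subset[OF ou]) (use p in \<open>auto simp: I_def\<close>)
    have "card {1..<p} < dim W" using W p by auto
    then obtain y where y: "y \<in> W" "y \<noteq> 0" "\<forall>j\<in>{1..<p}. y \<bullet> u j = 0"
      using kernel_exists[of "{1..<p}" u W] oJ W by auto
    define y' where "y' = y /\<^sub>R norm y"
    have "y' \<in> W" using y W unfolding y'_def by (simp add: subspace_scale)
    moreover have "norm y' = 1" using y unfolding y'_def by simp
    moreover have "\<forall>j\<in>{1..<p}. y' \<bullet> u j = 0" using y unfolding y'_def by simp
    then have "N y' \<bullet> N y' \<le> l p * (y' \<bullet> y')" using mx p unfolding I_def by blast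
    then have "N y' \<bullet> N y' \<le> l p" using \<open>norm y' = 1\<close> by (simp add: dot_square_norm)
    then have "norm (N y') \<le> s p" unfolding s_def norm_eq_sqrt_inner by (rule real_sqrt_le_mono)
    ultimately show "\<exists>y\<in>W. norm y = 1 \<and> norm (adjoint M y) \<le> s p" unfolding N_def by blast
  qed
  show ?thesis using that[OF rep P1 P2] .
qed


lemma hds_decomp:
  fixes Xs :: "nat \<Rightarrow> 'a::euclidean_space set"
  assumes H: "hilbert_dilation_system m Xs tau"
  shows "\<exists>xs. (\<forall>\<nu>\<in>{1..m}. xs \<nu> \<in> Xs \<nu>) \<and> x = (\<Sum>\<nu>\<in>{1..m}. xs \<nu>)"
proof -
  have sub: "\<forall>\<nu>\<in>{1..m}. subspace (Xs \<nu>)" and sp: "span (\<Union>\<nu>\<in>{1..m}. Xs \<nu>) = UNIV"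
    using H unfolding hilbert_dilation_system_def by auto
  define S where "S = {(\<Sum>\<nu>\<in>{1..m}. xs \<nu>) | xs. \<forall>\<nu>\<in>{1..m}. xs \<nu> \<in> Xs \<nu>}"
  have "subspace S" unfolding subspace_def
  proof (intro conjI ballI allI)
    show "0 \<in> S" unfolding S_def using sub
      by (auto intro!: exI[of _ "\<lambda>_. 0"] simp: subspace_0)
  next
    fix x y assume "x \<in> S" "y \<in> S"
    then obtain xs ys where "\<forall>\<nu>\<in>{1..m}. xs \<nu> \<in> Xs \<nu>" "x = (\<Sum>\<nu>\<in>{1..m}. xs \<nu>)"
      "\<forall>\<nu>\<in>{1..m}. ys \<nu> \<in> Xs \<nu>" "y = (\<Sum>\<nu>\<in>{1..m}. ys \<nu>)" unfolding S_def by auto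
    then show "x + y \<in> S" unfolding S_def using sub
      by (auto intro!: exI[of _ "\<lambda>\<nu>. xs \<nu> + ys \<nu>"] simp: sum.distrib subspace_add)
  next
    fix c :: real and x assume "x \<in> S"
    then obtain xs where "\<forall>\<nu>\<in>{1..m}. xs \<nu> \<in> Xs \<nu>" "x = (\<Sum>\<nu>\<in>{1..m}. xs \<nu>)"
      unfolding S_def by auto
    then show "c *\<^sub>R x \<in> S" unfolding S_def using sub
      by (auto intro!: exI[of _ "\<lambda>\<nu>. c *\<^sub>R xs \<nu>"] simp: scaleR_sum_right subspace_scale)
  qed
  moreover have "(\<Union>\<nu>\<in>{1..m}. Xs \<nu>) \<subseteq> S"
  proof
    fix x assume "x \<in> (\<Union>\<nu>\<in>{1..m}. Xs \<nu>)"
    then obtain \<mu> where mu: "\<mu> \<in> {1..m}" "x \<in> Xs \<mu>" by auto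
    show "x \<in> S" unfolding S_def using sub mu
      by (auto intro!: exI[of _ "\<lambda>\<nu>. if \<nu> = \<mu> then x else 0"] simp: subspace_0)
  qed
  ultimately have "span (\<Union>\<nu>\<in>{1..m}. Xs \<nu>) \<subseteq> S" by (rule span_minimal[rotated])
  then have "x \<in> S" using sp by auto
  then show ?thesis unfolding S_def by auto
qed

lemma hds_tau:
  assumes H: "hilbert_dilation_system m Xs tau" and d: "0 < \<delta>"
    and xs: "\<forall>\<nu>\<in>{1..m}. xs \<nu> \<in> Xs \<nu>"
  shows "tau \<delta> (\<Sum>\<nu>\<in>{1..m}. xs \<nu>) = (\<Sum>\<nu>\<in>{1..m}. (1 / \<delta> ^ \<nu>) *\<^sub>R xs \<nu>)"
proof -
  have "linear (tau \<delta>)" and t: "\<forall>\<nu>\<in>{1..m}. \<forall>x\<in>Xs \<nu>. tau \<delta> x = (1 / \<delta> ^ \<nu>) *\<^sub>R x"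
    using H d unfolding hilbert_dilation_system_def by auto
  then show ?thesis using xs by (simp add: linear_sum)
qed

lemma hds_inner:
  fixes Xs :: "nat \<Rightarrow> 'a::euclidean_space set"
  assumes H: "hilbert_dilation_system m Xs tau"
    and xs: "\<forall>\<nu>\<in>{1..m}. xs \<nu> \<in> Xs \<nu>" and ys: "\<forall>\<nu>\<in>{1..m}. ys \<nu> \<in> Xs \<nu>"
  shows "(\<Sum>\<nu>\<in>{1..m}. a \<nu> *\<^sub>R xs \<nu>) \<bullet> (\<Sum>\<mu>\<in>{1..m}. b \<mu> *\<^sub>R ys \<mu>) = (\<Sum>\<nu>\<in>{1..m}. a \<nu> * b \<nu> * (xs \<nu> \<bullet> ys \<nu>))"
proof -
  have orth: "\<forall>\<nu>\<in>{1..m}. \<forall>\<mu>\<in>{1..m}. \<nu> \<noteq> \<mu> \<longrightarrow> (\<forall>x\<in>Xs \<nu>. \<forall>y\<in>Xs \<mu>. x \<bullet> y = 0)"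
    using H unfolding hilbert_dilation_system_def by auto
  have "(\<Sum>\<nu>\<in>{1..m}. a \<nu> *\<^sub>R xs \<nu>) \<bullet> (\<Sum>\<mu>\<in>{1..m}. b \<mu> *\<^sub>R ys \<mu>) =
      (\<Sum>\<nu>\<in>{1..m}. \<Sum>\<mu>\<in>{1..m}. a \<nu> * b \<mu> * (xs \<nu> \<bullet> ys \<mu>))"
    apply (simp add: inner_sum_left inner_sum_right sum_distrib_left mult_ac)
    apply (rule sum.swap)
    done
  also have "\<dots> = (\<Sum>\<nu>\<in>{1..m}. \<Sum>\<mu>\<in>{1..m}. if \<mu> = \<nu> then a \<nu> * b \<nu> * (xs \<nu> \<bullet> ys \<nu>) else 0)"
    using orth xs ys by (intro sum.cong refl) auto
  also have "\<dots> = (\<Sum>\<nu>\<in>{1..m}. a \<nu> * b \<nu> * (xs \<nu> \<bullet> ys \<nu>))"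
    by (simp add: sum.delta)
  finally show ?thesis .
qed

lemma hds_selfadj:
  fixes Xs :: "nat \<Rightarrow> 'a::euclidean_space set"
  assumes H: "hilbert_dilation_system m Xs tau" and d: "0 < \<delta>"
  shows "tau \<delta> x \<bullet> y = x \<bullet> tau \<delta> y"
proof -
  obtain xs where xs: "\<forall>\<nu>\<in>{1..m}. xs \<nu> \<in> Xs \<nu>" "x = (\<Sum>\<nu>\<in>{1..m}. xs \<nu>)"
    using hds_decomp[OF H] by blast
  obtain ys where ys: "\<forall>\<nu>\<in>{1..m}. ys \<nu> \<in> Xs \<nu>" "y = (\<Sum>\<nu>\<in>{1..m}. ys \<nu>)"
    using hds_decomp[OF H] by blast
  have "tau \<delta> x \<bullet> y = (\<Sum>\<nu>\<in>{1..m}. (1 / \<delta> ^ \<nu>) *\<^sub>R xs \<nu>) \<bullet> (\<Sum>\<mu>\<in>{1..m}. 1 *\<^sub>R ys \<mu>)"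
    using hds_tau[OF H d xs(1)] xs(2) ys(2) by simp
  also have "\<dots> = (\<Sum>\<nu>\<in>{1..m}. (1 / \<delta> ^ \<nu>) * 1 * (xs \<nu> \<bullet> ys \<nu>))"
    by (rule hds_inner[OF H xs(1) ys(1)])
  also have "\<dots> = (\<Sum>\<nu>\<in>{1..m}. 1 * (1 / \<delta> ^ \<nu>) * (xs \<nu> \<bullet> ys \<nu>))" by simp
  also have "\<dots> = (\<Sum>\<nu>\<in>{1..m}. 1 *\<^sub>R xs \<nu>) \<bullet> (\<Sum>\<mu>\<in>{1..m}. (1 / \<delta> ^ \<mu>) *\<^sub>R ys \<mu>)"
    by (rule hds_inner[OF H xs(1) ys(1), symmetric])
  also have "\<dots> = x \<bullet> tau \<delta> y"
    using hds_tau[OF H d ys(1)] xs(2) ys(2) by simp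
  finally show ?thesis .
qed

lemma hds_comp:
  fixes Xs :: "nat \<Rightarrow> 'a::euclidean_space set"
  assumes H: "hilbert_dilation_system m Xs tau" and a: "0 < a" and b: "0 < b"
  shows "tau a (tau b x) = tau (a * b) x"
proof -
  obtain xs where xs: "\<forall>\<nu>\<in>{1..m}. xs \<nu> \<in> Xs \<nu>" "x = (\<Sum>\<nu>\<in>{1..m}. xs \<nu>)"
    using hds_decomp[OF H] by blast
  have sub: "\<forall>\<nu>\<in>{1..m}. subspace (Xs \<nu>)"
    using H unfolding hilbert_dilation_system_def by auto
  have xs': "\<forall>\<nu>\<in>{1..m}. (1 / b ^ \<nu>) *\<^sub>R xs \<nu> \<in> Xs \<nu>" using xs(1) sub by (simp add: subspace_scale)
  have "tau a (tau b x) = (\<Sum>\<nu>\<in>{1..m}. (1 / a ^ \<nu>) *\<^sub>R ((1 / b ^ \<nu>) *\<^sub>R xs \<nu>))"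
    using hds_tau[OF H b xs(1)] hds_tau[OF H a xs'] xs(2) by simp
  also have "\<dots> = (\<Sum>\<nu>\<in>{1..m}. (1 / (a * b) ^ \<nu>) *\<^sub>R xs \<nu>)"
    by (simp add: power_mult_distrib)
  also have "\<dots> = tau (a * b) x" using hds_tau[OF H _ xs(1), of "a * b"] a b xs(2) by simp
  finally show ?thesis .
qed

lemma hds_one:
  fixes Xs :: "nat \<Rightarrow> 'a::euclidean_space set"
  assumes H: "hilbert_dilation_system m Xs tau"
  shows "tau 1 x = x"
proof -
  obtain xs where xs: "\<forall>\<nu>\<in>{1..m}. xs \<nu> \<in> Xs \<nu>" "x = (\<Sum>\<nu>\<in>{1..m}. xs \<nu>)"
    using hds_decomp[OF H] by blast
  show ?thesis using hds_tau[OF H _ xs(1), of 1] xs(2) by simp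
qed

lemma hds_norm:
  fixes Xs :: "nat \<Rightarrow> 'a::euclidean_space set"
  assumes H: "hilbert_dilation_system m Xs tau" and t: "1 \<le> t"
  shows "norm (tau t x) \<le> norm x / t"
proof -
  obtain xs where xs: "\<forall>\<nu>\<in>{1..m}. xs \<nu> \<in> Xs \<nu>" "x = (\<Sum>\<nu>\<in>{1..m}. xs \<nu>)"
    using hds_decomp[OF H] by blast
  have tx: "tau t x = (\<Sum>\<nu>\<in>{1..m}. (1 / t ^ \<nu>) *\<^sub>R xs \<nu>)" using hds_tau[OF H _ xs(1), of t] t xs(2) by simp
  have "tau t x \<bullet> tau t x = (\<Sum>\<nu>\<in>{1..m}. (1 / t ^ \<nu>) * (1 / t ^ \<nu>) * (xs \<nu> \<bullet> xs \<nu>))"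
    unfolding tx by (rule hds_inner[OF H xs(1) xs(1)])
  also have "\<dots> \<le> (\<Sum>\<nu>\<in>{1..m}. (1 / t) * (1 / t) * (xs \<nu> \<bullet> xs \<nu>))"
  proof (intro sum_mono mult_right_mono)
    fix \<nu> assume \<nu>: "\<nu> \<in> {1..m}"
    have "t ^ 1 \<le> t ^ \<nu>" using t \<nu> by (intro power_increasing) auto
    then have "1 / t ^ \<nu> \<le> 1 / t" using t by (intro divide_left_mono) auto
    then show "1 / t ^ \<nu> * (1 / t ^ \<nu>) \<le> 1 / t * (1 / t)"
      using t by (intro mult_mono) auto
  qed simp
  also have "\<dots> = (1 / t) * (1 / t) * ((\<Sum>\<nu>\<in>{1..m}. 1 *\<^sub>R xs \<nu>) \<bullet> (\<Sum>\<mu>\<in>{1..m}. 1 *\<^sub>R xs \<mu>))"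
    by (subst hds_inner[OF H xs(1) xs(1)]) (simp add: sum_distrib_left)
  also have "\<dots> = (norm x / t)\<^sup>2" using xs(2) by (simp add: dot_square_norm power_divide power2_eq_square)
  finally have "(norm (tau t x))\<^sup>2 \<le> (norm x / t)\<^sup>2" by (simp add: dot_square_norm)
  then show ?thesis by (rule power2_le_imp_le) (use t in simp)
qed


lemma ratio_bound:
  fixes \<epsilon> a b sa sb :: real
  assumes e: "0 < \<epsilon>" "\<epsilon> < 1/2" and a: "0 < a" and b: "0 < b"
    and sa: "sa \<le> 1 / \<epsilon>" and sb: "\<epsilon> \<le> sb"
    and mono: "a \<le> b \<Longrightarrow> sb \<le> a / b * sa"
  shows "b \<le> a / \<epsilon>\<^sup>2"
proof (cases "a \<le> b")
  case True
  have "\<epsilon> \<le> a / b * (1 / \<epsilon>)"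
    using sb mono[OF True] sa a b by (smt (verit) divide_nonneg_pos mult_left_mono)
  then have "\<epsilon> * b \<le> a / \<epsilon>" using b e(1) by (simp add: field_simps)
  then show ?thesis using e b by (simp add: field_simps power2_eq_square)
next
  case False
  have "\<epsilon>\<^sup>2 \<le> 1" using e by (simp add: power_le_one)
  then have "a \<le> a / \<epsilon>\<^sup>2" using a e by (simp add: field_simps)
  then show ?thesis using False by simp
qed

theorem lemma4p9:
  fixes m :: nat and Xs :: "nat \<Rightarrow> 'a::euclidean_space set"
    and tau :: "real \<Rightarrow> 'a \<Rightarrow> 'a" and E :: "'a set" and \<epsilon> :: real
  assumes "hilbert_dilation_system m Xs tau"
    and "ellipsoid E"
    and "0 < \<epsilon>" and "\<epsilon> < 1/2"
  shows "\<exists>l r :: nat \<Rightarrow> real.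
           (\<forall>p\<in>{1..DIM('a)}. 0 < l p \<and> l p \<le> r p \<and> r p / l p \<le> 1 / \<epsilon>\<^sup>2) \<and>
           (\<forall>\<delta>>0. \<delta> \<notin> (\<Union>p\<in>{1..DIM('a)}. {l p..r p}) \<longrightarrow> eps_degenerate \<epsilon> (tau \<delta> ` E))"
proof -
  note H = assms(1)
  let ?d = "DIM('a)"
  have lintau: "linear (tau \<delta>)" if "0 < \<delta>" for \<delta>
    using H that unfolding hilbert_dilation_system_def by auto
  obtain \<sigma> v where rep: "ellipsoid_rep E \<sigma> v" using assms(2) unfolding ellipsoid_def by auto
  have ov: "ortho {1..?d} v" using rep unfolding ellipsoid_rep_def ortho_def by auto
  define A where "A x = (\<Sum>i\<in>{1..?d}. (\<sigma> i * (v i \<bullet> x)) *\<^sub>R v i)" for x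
  have linA: "linear A" unfolding A_def
    by (rule linearI) (simp_all add: inner_add_right scaleR_add_left sum.distrib scaleR_sum_right algebra_simps)
  have EA: "E = A ` cball 0 1"
  proof -
    have Eeq: "E = {(\<Sum>i\<in>{1..?d}. (c i * \<sigma> i) *\<^sub>R v i) | c. (\<Sum>i\<in>{1..?d}. (c i)\<^sup>2) \<le> 1}"
      using rep unfolding ellipsoid_rep_def by auto
    show ?thesis
    proof (intro equalityI subsetI)
      fix y assume "y \<in> E"
      then obtain c where c: "(\<Sum>i\<in>{1..?d}. (c i)\<^sup>2) \<le> 1" "y = (\<Sum>i\<in>{1..?d}. (c i * \<sigma> i) *\<^sub>R v i)"
        unfolding Eeq by auto
      define x where "x = (\<Sum>i\<in>{1..?d}. c i *\<^sub>R v i)"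
      have "x \<bullet> x = (\<Sum>i\<in>{1..?d}. c i * c i)" unfolding x_def by (rule ortho_sum_inner[OF ov]) simp
      then have "(norm x)\<^sup>2 \<le> 1\<^sup>2" using c(1) by (simp add: dot_square_norm power2_eq_square)
      then have "norm x \<le> 1" by (rule power2_le_imp_le) simp
      moreover have "A x = y"
      proof -
        have "v i \<bullet> x = c i" if "i \<in> {1..?d}" for i
          using ortho_coeff[OF ov _ that, of c] unfolding x_def by (simp add: inner_commute)
        then show ?thesis unfolding A_def c(2) by (intro sum.cong) (auto simp: mult.commute)
      qed
      ultimately show "y \<in> A ` cball 0 1" by auto
    next
      fix y assume "y \<in> A ` cball 0 1"
      then obtain x where x: "norm x \<le> 1" "y = A x" by auto
      have "(\<Sum>i\<in>{1..?d}. (v i \<bullet> x)\<^sup>2) \<le> x \<bullet> x" using bessel[OF ov, of x] by (simp add: inner_commute)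
      also have "\<dots> \<le> 1" using x(1) by (simp add: dot_square_norm power_le_one)
      finally have "(\<Sum>i\<in>{1..?d}. (v i \<bullet> x)\<^sup>2) \<le> 1" .
      moreover have "y = (\<Sum>i\<in>{1..?d}. ((v i \<bullet> x) * \<sigma> i) *\<^sub>R v i)"
        unfolding x(2) A_def by (simp add: mult.commute)
      ultimately show "y \<in> E" unfolding Eeq by (intro CollectI exI[where x="\<lambda>i. v i \<bullet> x"] conjI)
    qed
  qed
  define M where "M \<delta> = tau \<delta> \<circ> A" for \<delta>
  have linM: "linear (M \<delta>)" if "0 < \<delta>" for \<delta>
    unfolding M_def by (rule linear_compose[OF linA lintau[OF that]])
  have tauE: "tau \<delta> ` E = M \<delta> ` cball 0 1" for \<delta>
    unfolding EA M_def by (simp add: image_comp)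
  have adjM: "adjoint (M \<delta>) y = adjoint A (tau \<delta> y)" if "0 < \<delta>" for \<delta> y
  proof -
    have "adjoint (M \<delta>) = (\<lambda>y. adjoint A (tau \<delta> y))"
    proof (rule adjoint_unique, intro allI)
      fix x y
      show "M \<delta> x \<bullet> y = x \<bullet> adjoint A (tau \<delta> y)"
        unfolding M_def using hds_selfadj[OF H that, of "A x" y] adjoint_works[OF linA, of x "tau \<delta> y"]
        by simp
    qed
    then show ?thesis by simp
  qed
  define P where "P \<delta> s u \<longleftrightarrow> ellipsoid_rep (M \<delta> ` cball 0 1) s u \<and>
    (\<forall>p\<in>{1..?d}. \<forall>x\<in>span (u ` {1..p}). s p * norm x \<le> norm (adjoint (M \<delta>) x)) \<and>
    (\<forall>p\<in>{1..?d}. \<forall>W. subspace W \<and> p \<le> dim W \<longrightarrow> (\<exists>y\<in>W. norm y = 1 \<and> norm (adjoint (M \<delta>) y) \<le> s p))"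
    for \<delta> s u
  have "\<forall>\<delta>. \<exists>su. 0 < \<delta> \<longrightarrow> P \<delta> (fst su) (snd su)"
  proof
    fix \<delta> :: real
    show "\<exists>su. 0 < \<delta> \<longrightarrow> P \<delta> (fst su) (snd su)"
    proof (cases "0 < \<delta>")
      case True
      obtain s u where "P \<delta> s u" using svd[OF linM[OF True]] unfolding P_def by metis
      then show ?thesis by (intro exI[of _ "(s, u)"]) simp
    qed simp
  qed
  then obtain f where f: "\<And>\<delta>. 0 < \<delta> \<Longrightarrow> P \<delta> (fst (f \<delta>)) (snd (f \<delta>))" by metis
  define sf where "sf \<delta> = fst (f \<delta>)" for \<delta>
  define uf where "uf \<delta> = snd (f \<delta>)" for \<delta>
  have Pf: "P \<delta> (sf \<delta>) (uf \<delta>)" if "0 < \<delta>" for \<delta> using f[OF that] unfolding sf_def uf_def .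
  have sf_nn: "0 \<le> sf \<delta> p" if "0 < \<delta>" "p \<in> {1..?d}" for \<delta> p
    using Pf[OF that(1)] that(2) unfolding P_def ellipsoid_rep_def by auto
  have key: "sf \<delta>2 p \<le> \<delta>1 / \<delta>2 * sf \<delta>1 p" if d1: "0 < \<delta>1" and d12: "\<delta>1 \<le> \<delta>2" and p: "p \<in> {1..?d}"
    for \<delta>1 \<delta>2 p
  proof -
    have d2: "0 < \<delta>2" using d1 d12 by simp
    define t where "t = \<delta>2 / \<delta>1"
    have t1: "1 \<le> t" and t0: "0 < t" unfolding t_def using d1 d12 by auto
    have NN: "adjoint (M \<delta>2) x = adjoint (M \<delta>1) (tau t x)" for x
    proof -
      have "tau \<delta>2 x = tau \<delta>1 (tau t x)" using hds_comp[OF H d1 t0, of x] d1 unfolding t_def by simp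
      then show ?thesis using adjM[OF d1] adjM[OF d2] by simp
    qed
    define V where "V = span (uf \<delta>2 ` {1..p})"
    have ou2: "ortho {1..p} (uf \<delta>2)"
      using Pf[OF d2] p unfolding P_def ellipsoid_rep_def ortho_def by auto
    have dimV: "dim V = p" unfolding V_def using ortho_indep[OF ou2] by (simp add: dim_eq_card_independent)
    have injt: "inj_on (tau t) UNIV"
    proof (rule inj_on_inverseI)
      fix x show "tau (1/t) (tau t x) = x" using hds_comp[OF H _ t0, of "1/t" x] hds_one[OF H] t0 by simp
    qed
    define W where "W = tau t ` V"
    have subW: "subspace W" unfolding W_def V_def
      using linear_subspace_image[OF lintau[OF t0] subspace_span] by simp
    have "dim W = dim V" unfolding W_def
      by (rule dim_image_eq[OF lintau[OF t0]]) (use injt in \<open>auto simp: inj_on_def\<close>)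
    then have "p \<le> dim W" using dimV by simp
    then obtain y where y: "y \<in> W" "norm y = 1" "norm (adjoint (M \<delta>1) y) \<le> sf \<delta>1 p"
      using Pf[OF d1] p subW unfolding P_def by blast
    then obtain x where x: "x \<in> V" "y = tau t x" unfolding W_def by auto
    have "sf \<delta>2 p * norm x \<le> norm (adjoint (M \<delta>2) x)"
      using Pf[OF d2] p x(1) unfolding P_def V_def by blast
    also have "\<dots> = norm (adjoint (M \<delta>1) y)" using NN x(2) by simp
    finally have a: "sf \<delta>2 p * norm x \<le> sf \<delta>1 p" using y(3) by simp
    have "1 \<le> norm x / t" using hds_norm[OF H t1, of x] x(2) y(2) by simp
    then have "t \<le> norm x" using t0 by (simp add: field_simps)
    then have "sf \<delta>2 p * t \<le> sf \<delta>1 p" using a sf_nn[OF d2 p] by (meson mult_left_mono order_trans)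
    then show ?thesis unfolding t_def using d1 d2 by (simp add: field_simps)
  qed
  define Ip where "Ip p = {\<delta>. 0 < \<delta> \<and> sf \<delta> p \<in> {\<epsilon>..1/\<epsilon>}}" for p
  have rat: "b \<le> a / \<epsilon>\<^sup>2" if "a \<in> Ip p" "b \<in> Ip p" "p \<in> {1..?d}" for a b p
    using that by (intro ratio_bound[OF assms(3,4), of a b "sf a p" "sf b p"] key) (auto simp: Ip_def)
  define l where "l p = (if Ip p = {} then 1 else Inf (Ip p))" for p
  define r where "r p = (if Ip p = {} then 1 else Sup (Ip p))" for p
  have e2: "0 < \<epsilon>\<^sup>2" "\<epsilon>\<^sup>2 \<le> 1" using assms(3,4) by (auto simp: power_le_one)
  have props: "0 < l p \<and> l p \<le> r p \<and> r p / l p \<le> 1 / \<epsilon>\<^sup>2 \<and> (\<forall>\<delta>\<in>Ip p. l p \<le> \<delta> \<and> \<delta> \<le> r p)"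
    if p: "p \<in> {1..?d}" for p
  proof (cases "Ip p = {}")
    case True
    then show ?thesis unfolding l_def r_def using e2 by (simp add: field_simps)
  next
    case False
    then obtain a0 where a0: "a0 \<in> Ip p" by auto
    have a0p: "0 < a0" using a0 unfolding Ip_def by auto
    have bddA: "bdd_above (Ip p)" using rat[OF a0 _ p] by (intro bdd_aboveI[of _ "a0 / \<epsilon>\<^sup>2"]) auto
    have bddB: "bdd_below (Ip p)" unfolding Ip_def by (rule bdd_belowI[of _ 0]) auto
    have lowb: "a0 * \<epsilon>\<^sup>2 \<le> b" if "b \<in> Ip p" for b
      using rat[OF that a0 p] e2 by (simp add: field_simps)
    have linf: "a0 * \<epsilon>\<^sup>2 \<le> Inf (Ip p)" using False lowb by (intro cInf_greatest) auto
    have supb: "Sup (Ip p) * \<epsilon>\<^sup>2 \<le> a" if "a \<in> Ip p" for a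
    proof -
      have "Sup (Ip p) \<le> a / \<epsilon>\<^sup>2" using False rat[OF that _ p] by (intro cSup_least) auto
      then show ?thesis using e2 by (simp add: field_simps)
    qed
    have "Sup (Ip p) * \<epsilon>\<^sup>2 \<le> Inf (Ip p)" using False supb by (intro cInf_greatest) auto
    moreover have lpos: "0 < Inf (Ip p)" using linf a0p e2 by (smt (verit) mult_pos_pos)
    moreover have mem: "\<forall>\<delta>\<in>Ip p. Inf (Ip p) \<le> \<delta> \<and> \<delta> \<le> Sup (Ip p)"
      using bddA bddB by (auto intro: cInf_lower cSup_upper)
    ultimately show ?thesis unfolding l_def r_def using False a0 e2
      by (auto simp: field_simps intro: order_trans)
  qed
  show ?thesis
  proof (intro exI conjI ballI allI impI)
    fix p assume "p \<in> {1..?d}"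
    then show "0 < l p" "l p \<le> r p" "r p / l p \<le> 1 / \<epsilon>\<^sup>2" using props by auto
  next
    fix \<delta> :: real assume d: "0 < \<delta>" and nin: "\<delta> \<notin> (\<Union>p\<in>{1..?d}. {l p..r p})"
    have "sf \<delta> p \<notin> {\<epsilon>..1/\<epsilon>}" if "p \<in> {1..?d}" for p
    proof
      assume "sf \<delta> p \<in> {\<epsilon>..1/\<epsilon>}"
      then have "\<delta> \<in> Ip p" using d unfolding Ip_def by auto
      then show False using props[OF that] nin that by auto
    qed
    moreover have "ellipsoid_rep (tau \<delta> ` E) (sf \<delta>) (uf \<delta>)"
      using Pf[OF d] unfolding P_def tauE by auto
    ultimately show "eps_degenerate \<epsilon> (tau \<delta> ` E)" unfolding eps_degenerate_def by blast
  qed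
qed

end
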